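(* Let $R>0$ and let $B_{\mathcal D}=\{\beta_1,\dots,\beta_n\}$ with $0\le\beta_1\le\dots\le\beta_n$ and $\sum_i\beta_i=\beta$ be a bid set of $\mathcal D$. Fix $\ell\in\{1,\dots,n\}$ and suppose some $\ell$-set $I$ satisfies all three of: - (P1) $|I|\le n$; - (P2) $\Sigma(I)\ge \frac{R_\ell\,\ell(\ell+1)}{2}$; - (P3) $\sigma(I,\ell)+(n-|I|)\beta_{n-\ell}<R\beta$. Then $W(\pi_{\rm unif},B_{\mathcal D})\ge f(\ell)$.
   Context: Position-randomized auction with two bidders $\mathcal A$ and $\mathcal D$ and $n\ge1$ objects. $\mathcal D$ has budget $\beta>0$ and $\mathcal A$ has budget $R\beta$ with $R>0$. A bidding algorithm of a bidder is a pair $(\pi,B)$: $B$ (the bid set) is a multiset of $n$ nonnegative reals whose sum is at most the bidder's budget, and $\pi$ is a randomized algorithm permuting sequences of length $n$. Applying $\pi$ to a listing of $B$ gives the final bid sequence, whose $i$-th entry is the bid on object $i$. The two bidders' permutations are independent. Each object goes to the higher bid; on a tie each bidder wins it with probability $1/2$. $w(\pi_{\mathcal A},\pi_{\mathcal D},B_{\mathcal A},B_{\mathcal D})$ is the expected number of objects won by $\mathcal A$. $W(\pi_{\mathcal D},B_{\mathcal D})$ is its supremum over all bidding algorithms $(\pi_{\mathcal A},B_{\mathcal A})$ of $\mathcal A$. $\pi_{\rm unif}$ applies a uniformly random permutation. For $x,y>0$, $\mathrm{less}(x,y)=y(\lceil x/y\rceil-1)$. For $\ell=1,\dots,n$, let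 $R_\ell=\mathrm{less}(R,\frac2{\ell(\ell+1)})$ and $f(\ell)=n-\ell+\frac{\ell(\ell+1)R_\ell}{2n}$. Set $\beta_0=0$. An $\ell$-set is a finite multiset of elements of $\{0,1,\dots,\ell\}$. For a multiset $I$, $|I|$ is its cardinality and $\Sigma(I)$ the sum of its elements, both counting multiplicity. For an $\ell$-set $I$, $\sigma(I,\ell)=\sum_{i\in I}\beta_{n-\ell+i}$, counting multiplicity. *)

theory Defs
  imports "HOL-Probability.Probability" "HOL-Combinatorics.Permutations" "HOL-Library.Multiset"
begin

(* Objects and bid indices are 1..n.  A bid set is given by a listing
   a :: nat => real (entries a 1, ..., a n); a (randomized) permuting algorithm
   is a probability distribution over permutations tau of {1..n}; the final
   bid on object i is a (tau i). *)

definition win :: "real \<Rightarrow> real \<Rightarrow> real" where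
  "win x y = (if x > y then 1 else if x = y then 1/2 else 0)"

definition w_exp :: "nat \<Rightarrow> (nat \<Rightarrow> nat) pmf \<Rightarrow> (nat \<Rightarrow> nat) pmf
                      \<Rightarrow> (nat \<Rightarrow> real) \<Rightarrow> (nat \<Rightarrow> real) \<Rightarrow> real" where
  "w_exp n piA piD a b =
     measure_pmf.expectation (pair_pmf piA piD)
       (\<lambda>(\<tau>, \<sigma>). \<Sum>i\<in>{1..n}. win (a (\<tau> i)) (b (\<sigma> i)))"

definition bidding_alg :: "nat \<Rightarrow> real \<Rightarrow> (nat \<Rightarrow> nat) pmf \<Rightarrow> (nat \<Rightarrow> real) \<Rightarrow> bool" where
  "bidding_alg n bud p a \<longleftrightarrow>
     set_pmf p \<subseteq> {\<tau>. \<tau> permutes {1..n}} \<and>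
     (\<forall>i\<in>{1..n}. 0 \<le> a i) \<and> (\<Sum>i\<in>{1..n}. a i) \<le> bud"

definition pi_unif :: "nat \<Rightarrow> (nat \<Rightarrow> nat) pmf" where
  "pi_unif n = pmf_of_set {\<sigma>. \<sigma> permutes {1..n}}"

definition W :: "nat \<Rightarrow> real \<Rightarrow> (nat \<Rightarrow> nat) pmf \<Rightarrow> (nat \<Rightarrow> real) \<Rightarrow> real" where
  "W n budA piD b = Sup {w_exp n piA piD a b | piA a. bidding_alg n budA piA a}"

definition less :: "real \<Rightarrow> real \<Rightarrow> real" where
  "less x y = y * (real_of_int \<lceil>x / y\<rceil> - 1)"

definition R_l :: "real \<Rightarrow> nat \<Rightarrow> real" where
  "R_l R l = less R (2 / (real l * (real l + 1)))"

definition f_l :: "nat \<Rightarrow> real \<Rightarrow> nat \<Rightarrow> real" where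
  "f_l n R l = real n - real l + real l * (real l + 1) * R_l R l / (2 * real n)"

definition beta0 :: "(nat \<Rightarrow> real) \<Rightarrow> nat \<Rightarrow> real" where
  "beta0 b i = (if i = 0 then 0 else b i)"

definition l_set :: "nat \<Rightarrow> nat multiset \<Rightarrow> bool" where
  "l_set l I \<longleftrightarrow> (\<forall>i\<in>#I. i \<le> l)"

definition sigma_I :: "nat \<Rightarrow> (nat \<Rightarrow> real) \<Rightarrow> nat multiset \<Rightarrow> nat \<Rightarrow> real" where
  "sigma_I n b I l = (\<Sum>i\<in>#I. beta0 b (n - l + i))"

end

theory Submission
  imports Defs
begin
lemma win_bounds: "0 \<le> win x y" "win x y \<le> 1"
  by (auto simp: win_def)

lemma w_exp_le: "w_exp n p q a b \<le> real n"
proof -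
  let ?f = "(\<lambda>(\<tau>, \<sigma>). \<Sum>i\<in>{1..n}. win (a (\<tau> i)) (b (\<sigma> i)))"
  have bd: "\<And>x. ?f x \<le> real n" "\<And>x. 0 \<le> ?f x"
  proof -
    fix x :: "(nat \<Rightarrow> nat) \<times> (nat \<Rightarrow> nat)"
    obtain t s where x: "x = (t,s)" by force
    have "(\<Sum>i\<in>{1..n}. win (a (t i)) (b (s i))) \<le> (\<Sum>i\<in>{1..n}. 1)"
      by (rule sum_mono) (simp add: win_bounds)
    then show "?f x \<le> real n" by (simp add: x)
    show "0 \<le> ?f x" by (simp add: x sum_nonneg win_bounds)
  qed
  have int: "integrable (measure_pmf (pair_pmf p q)) ?f"
    by (rule measure_pmf.integrable_const_bound[where B="real n"]) (use bd in auto)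
  show ?thesis unfolding w_exp_def
    by (rule measure_pmf.integral_le_const[OF int]) (use bd in auto)
qed

lemma marg:
  fixes g :: "nat \<Rightarrow> real"
  assumes i: "i \<in> {1..n}"
  shows "(\<Sum>\<sigma>\<in>{\<sigma>. \<sigma> permutes {1..n}}. g (\<sigma> i)) = real (card {\<sigma>. \<sigma> permutes {1..n}}) / real n * (\<Sum>j\<in>{1..n}. g j)"
proof -
  define S where "S = {\<sigma>. \<sigma> permutes {1..n::nat}}"
  have finS: "finite S" unfolding S_def by (rule finite_permutations) simp
  define N where "N j = card {\<sigma>\<in>S. \<sigma> i = j}" for j
  have eqN: "N j = N k" if j: "j \<in> {1..n}" and k: "k \<in> {1..n}" for j k
  proof -
    let ?t = "Transposition.transpose j k"
    have tp: "?t permutes {1..n}" using j k by (rule permutes_swap_id)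
    have "bij_betw (\<lambda>\<sigma>. ?t \<circ> \<sigma>) {\<sigma>\<in>S. \<sigma> i = j} {\<sigma>\<in>S. \<sigma> i = k}"
    proof (rule bij_betw_byWitness[where f'="\<lambda>\<sigma>. ?t \<circ> \<sigma>"])
      show "\<forall>a\<in>{\<sigma> \<in> S. \<sigma> i = j}. ?t \<circ> (?t \<circ> a) = a" by (auto simp: fun_eq_iff)
      show "\<forall>a\<in>{\<sigma> \<in> S. \<sigma> i = k}. ?t \<circ> (?t \<circ> a) = a" by (auto simp: fun_eq_iff)
      show "(\<lambda>\<sigma>. ?t \<circ> \<sigma>) ` {\<sigma> \<in> S. \<sigma> i = j} \<subseteq> {\<sigma> \<in> S. \<sigma> i = k}"
        using tp by (auto simp: S_def permutes_compose)
      show "(\<lambda>\<sigma>. ?t \<circ> \<sigma>) ` {\<sigma> \<in> S. \<sigma> i = k} \<subseteq> {\<sigma> \<in> S. \<sigma> i = j}"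
        using tp by (auto simp: S_def permutes_compose transpose_def)
    qed
    then show ?thesis unfolding N_def by (rule bij_betw_same_card)
  qed
  have inr: "\<sigma> i \<in> {1..n}" if "\<sigma> \<in> S" for \<sigma>
    using that i unfolding S_def by (metis mem_Collect_eq permutes_in_image)
  have gen: "(\<Sum>\<sigma>\<in>S. h (\<sigma> i)) = (\<Sum>j\<in>{1..n}. real (N j) * h j)" for h :: "nat \<Rightarrow> real"
  proof -
    have "(\<Sum>\<sigma>\<in>S. h (\<sigma> i)) = (\<Sum>\<sigma>\<in>S. \<Sum>j\<in>{1..n}. if \<sigma> i = j then h j else 0)"
    proof (rule sum.cong[OF refl])
      fix \<sigma> assume "\<sigma> \<in> S"
      then have "\<sigma> i \<in> {1..n}" by (rule inr)
      then show "h (\<sigma> i) = (\<Sum>j\<in>{1..n}. if \<sigma> i = j then h j else 0)"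
        by (simp add: sum.delta)
    qed
    also have "\<dots> = (\<Sum>j\<in>{1..n}. \<Sum>\<sigma>\<in>S. if \<sigma> i = j then h j else 0)"
      by (rule sum.swap)
    also have "\<dots> = (\<Sum>j\<in>{1..n}. real (N j) * h j)"
      by (rule sum.cong) (auto simp: N_def sum.If_cases finS Collect_conj_eq Int_commute)
    finally show ?thesis .
  qed
  have Ni: "N j = N i" if "j \<in> {1..n}" for j using eqN[OF that i] .
  have "real (card S) = (\<Sum>\<sigma>\<in>S. (\<lambda>_. 1::real) (\<sigma> i))" by simp
  also have "\<dots> = (\<Sum>j\<in>{1..n}. real (N j))" using gen[of "\<lambda>_. 1"] by simp
  also have "\<dots> = real n * real (N i)" by (simp add: Ni)
  finally have cS: "real (card S) = real n * real (N i)" .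
  have n0: "real n > 0" using i by auto
  have "(\<Sum>\<sigma>\<in>S. g (\<sigma> i)) = (\<Sum>j\<in>{1..n}. real (N i) * g j)" by (simp add: gen Ni)
  also have "\<dots> = real (card S) / real n * (\<Sum>j\<in>{1..n}. g j)"
    using n0 by (simp add: cS sum_distrib_left)
  finally show ?thesis unfolding S_def .
qed

lemma split_sum:
  fixes g :: "nat \<Rightarrow> real"
  assumes "length xs \<le> n"
  shows "(\<Sum>i\<in>{1..n}. g (if i \<le> length xs then c + xs!(i-1) else c))
         = sum_list (map (\<lambda>x. g (c+x)) xs) + real (n - length xs) * g c"
proof -
  let ?m = "length xs"
  have U: "{1..n} = {1..?m} \<union> {?m+1..n}" using assms by auto
  have "(\<Sum>i\<in>{1..n}. g (if i \<le> ?m then c + xs!(i-1) else c))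
      = (\<Sum>i\<in>{1..?m}. g (if i \<le> ?m then c + xs!(i-1) else c))
        + (\<Sum>i\<in>{?m+1..n}. g (if i \<le> ?m then c + xs!(i-1) else c))"
    unfolding U by (rule sum.union_disjoint) auto
  also have "(\<Sum>i\<in>{1..?m}. g (if i \<le> ?m then c + xs!(i-1) else c)) = (\<Sum>i\<in>{1..?m}. g (c + xs!(i-1)))"
    by (rule sum.cong) auto
  also have "\<dots> = (\<Sum>i\<in>Suc ` {..<?m}. g (c + xs!(i-1)))"
    by (simp add: image_Suc_lessThan)
  also have "\<dots> = (\<Sum>i<?m. g (c + xs!i))"
    by (subst sum.reindex) auto
  also have "\<dots> = sum_list (map (\<lambda>x. g (c+x)) xs)"
    by (simp add: sum_list_sum_nth atLeast0LessThan)
  also have "(\<Sum>i\<in>{?m+1..n}. g (if i \<le> ?m then c + xs!(i-1) else c)) = (\<Sum>i\<in>{?m+1..n}. g c)"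
    by (rule sum.cong) auto
  also have "\<dots> = real (n - ?m) * g c" by simp
  finally show ?thesis .
qed



theorem lemma2:
  fixes n l :: nat and R beta :: real and b :: "nat \<Rightarrow> real" and I :: "nat multiset"
  assumes "n \<ge> 1" and "R > 0" and "beta > 0"
    and "\<forall>i\<in>{1..n}. 0 \<le> b i"
    and "\<forall>i\<in>{1..n}. \<forall>j\<in>{1..n}. i \<le> j \<longrightarrow> b i \<le> b j"
    and "(\<Sum>i\<in>{1..n}. b i) = beta"
    and "l \<in> {1..n}"
    and "l_set l I"
    and P1: "size I \<le> n"
    and P2: "real (sum_mset I) \<ge> R_l R l * real l * (real l + 1) / 2"
    and P3: "sigma_I n b I l + (real n - real (size I)) * beta0 b (n - l) < R * beta"
  shows "W n (R * beta) (pi_unif n) b \<ge> f_l n R l"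
proof -
  note A = assms
  obtain xs where xsI: "mset xs = I" using ex_mset by blast
  define m where "m = length xs"
  have mI: "m = size I" using xsI m_def by auto
  have mn: "m \<le> n" using P1 mI by simp
  have ln: "l \<le> n" "1 \<le> l" using A(7) by auto
  have xs_le: "x \<le> l" if "x \<in> set xs" for x
    using A(8) that xsI unfolding l_set_def by (metis set_mset_mset)
  define c where "c = n - l"
  define t where "t i = (if i \<le> length xs then c + xs!(i-1) else c)" for i
  have t_le: "t i \<le> n" if "i \<in> {1..n}" for i
  proof (cases "i \<le> length xs")
    case True
    then have "xs!(i-1) \<in> set xs" using that by auto
    then have "xs!(i-1) \<le> l" by (rule xs_le)
    then show ?thesis using True ln unfolding t_def c_def by simp
  next
    case False then show ?thesis unfolding t_def c_def by simp
  qed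
  have b0nn: "0 \<le> beta0 b k" if "k \<le> n" for k
    using A(4) that unfolding beta0_def by auto
  define L where "L = sigma_I n b I l + (real n - real (size I)) * beta0 b (n - l)"
  have sumL: "(\<Sum>i\<in>{1..n}. beta0 b (t i)) = L"
  proof -
    have "(\<Sum>i\<in>{1..n}. beta0 b (t i)) = sum_list (map (\<lambda>x. beta0 b (c+x)) xs) + real (n - length xs) * beta0 b c"
      unfolding t_def using split_sum[of xs n "beta0 b" c] mn m_def by simp
    also have "sum_list (map (\<lambda>x. beta0 b (c+x)) xs) = sigma_I n b I l"
      unfolding sigma_I_def c_def xsI[symmetric]
      by (simp add: sum_mset_sum_list[symmetric])
    finally show ?thesis unfolding L_def c_def using mn mI m_def by (simp add: of_nat_diff)
  qed
  have sumt: "(\<Sum>i\<in>{1..n}. real (t i)) = real n * real c + real (sum_mset I)"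
  proof -
    have "(\<Sum>i\<in>{1..n}. real (t i)) = sum_list (map (\<lambda>x. real (c+x)) xs) + real (n - length xs) * real c"
      unfolding t_def using split_sum[of xs n real c] mn m_def by simp
    also have "sum_list (map (\<lambda>x. real (c+x)) xs) = real (length xs) * real c + real (sum_mset I)"
      unfolding xsI[symmetric]
      by (induction xs) (auto simp: algebra_simps)
    finally show ?thesis using mn m_def by (simp add: of_nat_diff algebra_simps)
  qed
  have npos: "real n > 0" using A(1) by simp
  define eps where "eps = (R * beta - L) / real n"
  have eps: "eps > 0" unfolding eps_def using P3 npos L_def by simp
  define a where "a i = beta0 b (t i) + eps" for i
  have alg: "bidding_alg n (R * beta) (return_pmf id) a"
    unfolding bidding_alg_def
  proof (intro conjI ballI)
    show "set_pmf (return_pmf id) \<subseteq> {\<tau>. \<tau> permutes {1..n}}" by (simp add: permutes_id)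
    fix i assume "i \<in> {1..n}"
    then show "0 \<le> a i" unfolding a_def using b0nn[OF t_le] eps by (simp add: less_imp_le add_nonneg_nonneg)
  next
    have "(\<Sum>i\<in>{1..n}. a i) = L + real n * eps" unfolding a_def sum.distrib sumL by simp
    also have "\<dots> = R * beta" unfolding eps_def using npos by simp
    finally show "(\<Sum>i\<in>{1..n}. a i) \<le> R * beta" by simp
  qed
  have winb: "(\<Sum>j\<in>{1..n}. win (a i) (b j)) \<ge> real (t i)" if i: "i \<in> {1..n}" for i
  proof -
    have "(\<Sum>j\<in>{1..n}. win (a i) (b j)) \<ge> (\<Sum>j\<in>{1..n}. if j \<le> t i then 1 else 0)"
    proof (rule sum_mono)
      fix j assume j: "j \<in> {1..n}"
      show "(if j \<le> t i then 1 else 0) \<le> win (a i) (b j)"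
      proof (cases "j \<le> t i")
        case True
        then have "b j \<le> b (t i)" using A(5) j t_le[OF i] by auto
        also have "\<dots> = beta0 b (t i)" using True j unfolding beta0_def by auto
        also have "\<dots> < a i" unfolding a_def using eps by simp
        finally show ?thesis using True by (simp add: win_def)
      qed (simp add: win_def)
    qed
    also have "(\<Sum>j\<in>{1..n}. if j \<le> t i then 1 else (0::real)) = real (card ({1..n} \<inter> {j. j \<le> t i}))"
      by (simp only: sum.If_cases finite_atLeastAtMost) simp
    also have "{1..n} \<inter> {j. j \<le> t i} = {1..t i}" using t_le[OF i] by auto
    finally show ?thesis by simp
  qed
  define S where "S = {\<sigma>. \<sigma> permutes {1..n::nat}}"
  have finS: "finite S" unfolding S_def by (rule finite_permutations) simp
  have neS: "S \<noteq> {}" unfolding S_def using permutes_id by blast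
  have cS: "real (card S) > 0" using finS neS by (simp add: card_gt_0_iff)
  have wexp: "w_exp n (return_pmf id) (pi_unif n) a b = (\<Sum>i\<in>{1..n}. \<Sum>j\<in>{1..n}. win (a i) (b j)) / real n"
  proof -
    have "w_exp n (return_pmf id) (pi_unif n) a b
        = measure_pmf.expectation (pmf_of_set S) (\<lambda>\<sigma>. \<Sum>i\<in>{1..n}. win (a i) (b (\<sigma> i)))"
      unfolding w_exp_def pi_unif_def pair_return_pmf1 S_def by simp
    also have "\<dots> = (\<Sum>\<sigma>\<in>S. \<Sum>i\<in>{1..n}. win (a i) (b (\<sigma> i))) / real (card S)"
      by (rule integral_pmf_of_set[OF neS finS])
    also have "(\<Sum>\<sigma>\<in>S. \<Sum>i\<in>{1..n}. win (a i) (b (\<sigma> i))) = (\<Sum>i\<in>{1..n}. \<Sum>\<sigma>\<in>S. win (a i) (b (\<sigma> i)))"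
      by (rule sum.swap)
    also have "\<dots> = (\<Sum>i\<in>{1..n}. real (card S) / real n * (\<Sum>j\<in>{1..n}. win (a i) (b j)))"
      unfolding S_def by (rule sum.cong[OF refl], rule marg)
    also have "(\<Sum>i\<in>{1..n}. real (card S) / real n * (\<Sum>j\<in>{1..n}. win (a i) (b j)))
        = real (card S) / real n * (\<Sum>i\<in>{1..n}. \<Sum>j\<in>{1..n}. win (a i) (b j))"
      by (rule sum_distrib_left[symmetric])
    also have "real (card S) / real n * (\<Sum>i\<in>{1..n}. \<Sum>j\<in>{1..n}. win (a i) (b j)) / real (card S)
        = (\<Sum>i\<in>{1..n}. \<Sum>j\<in>{1..n}. win (a i) (b j)) / real n"
      using cS by simp
    finally show ?thesis .
  qed
  have "f_l n R l \<le> (\<Sum>i\<in>{1..n}. real (t i)) / real n"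
  proof -
    have e1: "f_l n R l = real c + (R_l R l * real l * (real l + 1) / 2) / real n"
      unfolding f_l_def c_def using ln npos by (simp add: of_nat_diff field_simps)
    have e2: "(\<Sum>i\<in>{1..n}. real (t i)) / real n = real c + real (sum_mset I) / real n"
      unfolding sumt using npos by (simp add: field_simps)
    have "(R_l R l * real l * (real l + 1) / 2) / real n \<le> real (sum_mset I) / real n"
      using divide_right_mono[OF P2, of "real n"] npos by simp
    then show ?thesis unfolding e1 e2 by simp
  qed
  also have "\<dots> \<le> w_exp n (return_pmf id) (pi_unif n) a b"
    unfolding wexp using npos
    by (intro divide_right_mono sum_mono winb) auto
  also have "\<dots> \<le> W n (R * beta) (pi_unif n) b"
    unfolding W_def
  proof (rule cSup_upper)
    show "w_exp n (return_pmf id) (pi_unif n) a b \<in> {w_exp n piA (pi_unif n) a b |piA a. bidding_alg n (R * beta) piA a}"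
      using alg by blast
    show "bdd_above {w_exp n piA (pi_unif n) a b |piA a. bidding_alg n (R * beta) piA a}"
      by (rule bdd_aboveI[where M="real n"]) (auto simp: w_exp_le)
  qed
  finally show ?thesis .
qed

end
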